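(* Let $(S,\mu)$ be a complete, $\sigma$-finite positive measure space and let $X$ be a Banach space whose norm is Fréchet differentiable. Then every non-zero left symmetric point (with respect to Birkhoff–James orthogonality) of $L^1(\mu,X)$ is a smooth point of $L^1(\mu,X)$.
   Context: $L^1(\mu,X)$ is the Lebesgue–Bochner space of (classes of a.e. equal) strongly measurable $f:S\to X$ with $\|f\|=\int_S\|f(s)\|\,d\mu(s)<\infty$. In a normed space $Y$ over $\mathbb{K}$, $x\perp_{BJ}y$ means $\|x+\lambda y\|\ge\|x\|$ for all $\lambda\in\mathbb{K}$; $x$ is a left symmetric point if $x\perp_{BJ}y$ implies $y\perp_{BJ}x$ for all $y\in Y$. A non-zero $x$ is smooth if there is a unique norm-one $F\in Y^*$ with $F(x)=\|x\|$. The norm of $X$ is Fréchet differentiable if for every non-zero $x$ there is $\varphi\in X^*$ with $\lim_{h\to0}\big|\|x+h\|-\|x\|-\varphi(h)\big|/\|h\|=0$. *)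

theory Defs
  imports "HOL-Analysis.Analysis"
begin

text \<open>Scalar field K (a real normed field, i.e. R or C) acting on a real Banach space:
  this encodes a Banach space over K.\<close>
definition scalar_action :: "('k::real_normed_field \<Rightarrow> 'x::real_normed_vector \<Rightarrow> 'x) \<Rightarrow> bool" where
  "scalar_action sc \<longleftrightarrow>
     (\<forall>a x y. sc a (x + y) = sc a x + sc a y) \<and>
     (\<forall>a b x. sc (a + b) x = sc a x + sc b x) \<and>
     (\<forall>a b x. sc (a * b) x = sc a (sc b x)) \<and>
     (\<forall>r x. sc (of_real r) x = r *\<^sub>R x) \<and>
     (\<forall>a x. norm (sc a x) = norm a * norm x)"

definition frechet_diff_norm :: "'x::real_normed_vector itself \<Rightarrow> bool" where
  "frechet_diff_norm _ \<longleftrightarrow> (\<forall>x::'x. x \<noteq> 0 \<longrightarrow> (\<exists>\<phi>. (norm has_derivative \<phi>) (at x)))"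

definition strongly_measurable :: "'s measure \<Rightarrow> ('s \<Rightarrow> 'x::real_normed_vector) \<Rightarrow> bool" where
  "strongly_measurable M f \<longleftrightarrow>
     (\<exists>u::nat \<Rightarrow> 's \<Rightarrow> 'x. (\<forall>n. simple_function M (u n)) \<and>
        (AE s in M. (\<lambda>n. u n s) \<longlonglongrightarrow> f s))"

text \<open>Representatives of elements of the Lebesgue-Bochner space L^1(mu,X).\<close>
definition L1set :: "'s measure \<Rightarrow> ('s \<Rightarrow> 'x::real_normed_vector) set" where
  "L1set M = {f. strongly_measurable M f \<and> (\<integral>\<^sup>+ s. ennreal (norm (f s)) \<partial>M) < \<infinity>}"

definition L1norm :: "'s measure \<Rightarrow> ('s \<Rightarrow> 'x::real_normed_vector) \<Rightarrow> real" where
  "L1norm M f = enn2real (\<integral>\<^sup>+ s. ennreal (norm (f s)) \<partial>M)"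

definition bj_orth :: "('k::real_normed_field \<Rightarrow> 'x::real_normed_vector \<Rightarrow> 'x) \<Rightarrow> 's measure
    \<Rightarrow> ('s \<Rightarrow> 'x) \<Rightarrow> ('s \<Rightarrow> 'x) \<Rightarrow> bool" where
  "bj_orth sc M f g \<longleftrightarrow> (\<forall>c::'k. L1norm M f \<le> L1norm M (\<lambda>s. f s + sc c (g s)))"

definition left_symmetric :: "('k::real_normed_field \<Rightarrow> 'x::real_normed_vector \<Rightarrow> 'x) \<Rightarrow> 's measure
    \<Rightarrow> ('s \<Rightarrow> 'x) \<Rightarrow> bool" where
  "left_symmetric sc M f \<longleftrightarrow>
     f \<in> L1set M \<and> (\<forall>g \<in> L1set M. bj_orth sc M f g \<longrightarrow> bj_orth sc M g f)"

text \<open>Continuous K-linear functionals on L^1(mu,X) (they automatically respect a.e. equality).\<close>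
definition L1_dual :: "('k::real_normed_field \<Rightarrow> 'x::real_normed_vector \<Rightarrow> 'x) \<Rightarrow> 's measure
    \<Rightarrow> (('s \<Rightarrow> 'x) \<Rightarrow> 'k) set" where
  "L1_dual sc M = {F.
     (\<forall>f\<in>L1set M. \<forall>g\<in>L1set M. F (\<lambda>s. f s + g s) = F f + F g) \<and>
     (\<forall>c. \<forall>f\<in>L1set M. F (\<lambda>s. sc c (f s)) = c * F f) \<and>
     (\<exists>K. \<forall>f\<in>L1set M. norm (F f) \<le> K * L1norm M f)}"

definition dual_norm :: "'s measure \<Rightarrow> (('s \<Rightarrow> 'x::real_normed_vector) \<Rightarrow> 'k::real_normed_field) \<Rightarrow> real" where
  "dual_norm M F = (SUP f \<in> {f \<in> L1set M. L1norm M f \<le> 1}. norm (F f))"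

definition support_functional :: "('k::real_normed_field \<Rightarrow> 'x::real_normed_vector \<Rightarrow> 'x) \<Rightarrow> 's measure
    \<Rightarrow> ('s \<Rightarrow> 'x) \<Rightarrow> (('s \<Rightarrow> 'x) \<Rightarrow> 'k) \<Rightarrow> bool" where
  "support_functional sc M f F \<longleftrightarrow>
     F \<in> L1_dual sc M \<and> dual_norm M F = 1 \<and> F f = of_real (L1norm M f)"

definition smooth_point :: "('k::real_normed_field \<Rightarrow> 'x::real_normed_vector \<Rightarrow> 'x) \<Rightarrow> 's measure
    \<Rightarrow> ('s \<Rightarrow> 'x) \<Rightarrow> bool" where
  "smooth_point sc M f \<longleftrightarrow>
     f \<in> L1set M \<and> L1norm M f \<noteq> 0 \<and>
     (\<exists>F. support_functional sc M f F) \<and>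
     (\<forall>F G. support_functional sc M f F \<longrightarrow> support_functional sc M f G \<longrightarrow>
        (\<forall>g\<in>L1set M. F g = G g))"

end

theory Submission
  imports Defs "HOL-Complex_Analysis.Complex_Analysis"
begin


lemma resolvent_ident:
  fixes y a b a0 b0 :: "'k::field"
  assumes D: "(y-a)*(y-a) + b*b \<noteq> 0" and D0: "(y-a0)*(y-a0) + b0*b0 \<noteq> 0"
  defines "U \<equiv> (y-a)/((y-a)*(y-a) + b*b)" and "V \<equiv> b/((y-a)*(y-a) + b*b)"
  defines "U0 \<equiv> (y-a0)/((y-a0)*(y-a0) + b0*b0)" and "V0 \<equiv> b0/((y-a0)*(y-a0) + b0*b0)"
  shows "U - U0 = (a-a0)*(U*U0 - V*V0) - (b-b0)*(U*V0 + V*U0)"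
    and "V - V0 = (a-a0)*(U*V0 + V*U0) + (b-b0)*(U*U0 - V*V0)"
  using D D0 unfolding U_def V_def U0_def V0_def
  by (simp_all add: field_simps, algebra+)

lemma quad_exists:
  fixes y :: "'k::real_normed_field" and psi :: "'k \<Rightarrow> real"
  assumes bl: "bounded_linear psi" and psi1: "psi 1 = 1"
  shows "\<exists>s t::real. y*y - of_real s * y + of_real t = 0"
proof (rule ccontr)
  assume "\<not> ?thesis"
  hence H: "\<And>s t. y*y - of_real s * y + of_real t \<noteq> 0" by blast
  define D where "D = (\<lambda>l::complex. (y - of_real (Re l))*(y - of_real (Re l)) + of_real (Im l) * of_real (Im l))"
  have Dnz: "D l \<noteq> 0" for l
  proof -
    have "D l = y*y - of_real (2*Re l) * y + of_real (Re l * Re l + Im l * Im l)"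
      unfolding D_def by (simp add: algebra_simps)
    thus ?thesis using H[of "2*Re l" "Re l * Re l + Im l * Im l"] by metis
  qed
  define U where "U = (\<lambda>l. (y - of_real (Re l)) / D l)"
  define V where "V = (\<lambda>l. of_real (Im l) / D l)"
  define pc where "pc = (\<lambda>w. psi (y * w))"
  have blc: "bounded_linear pc" unfolding pc_def
    by (rule bounded_linear_compose[OF bl bounded_linear_mult_right])
  define P where "P = (\<lambda>l l0. U l * U l0 - V l * V l0)"
  define Q where "Q = (\<lambda>l l0. U l * V l0 + V l * U l0)"
  define Psi where "Psi = (\<lambda>l. Complex (pc (U l)) (pc (V l)))"
  have contD: "continuous_on UNIV D" unfolding D_def
    by (intro continuous_intros)
  have contU: "isCont U l" for l
    unfolding U_def using Dnz contD
    by (intro continuous_intros) (auto simp: continuous_on_eq_continuous_at)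
  have contV: "isCont V l" for l
    unfolding V_def using Dnz contD
    by (intro continuous_intros) (auto simp: continuous_on_eq_continuous_at)
  have diff: "(Psi has_field_derivative Complex (pc (P l0 l0)) (pc (Q l0 l0))) (at l0)" for l0
  proof -
    have eq: "(Psi l - Psi l0) / (l - l0) = Complex (pc (P l l0)) (pc (Q l l0))" if "l \<noteq> l0" for l
    proof -
      have i1: "U l - U l0 = of_real (Re l - Re l0) * P l l0 - of_real (Im l - Im l0) * Q l l0"
        using resolvent_ident(1)[of y "of_real (Re l)" "of_real (Im l)" "of_real (Re l0)" "of_real (Im l0)"]
          Dnz[of l] Dnz[of l0]
        unfolding U_def V_def P_def Q_def D_def by (simp add: of_real_diff)
      have i2: "V l - V l0 = of_real (Re l - Re l0) * Q l l0 + of_real (Im l - Im l0) * P l l0"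
        using resolvent_ident(2)[of y "of_real (Re l)" "of_real (Im l)" "of_real (Re l0)" "of_real (Im l0)"]
          Dnz[of l] Dnz[of l0]
        unfolding U_def V_def P_def Q_def D_def by (simp add: of_real_diff)
      have lin: "pc (of_real r * w) = r * pc w" for r w
        using linear_scale[OF bounded_linear.linear[OF blc], of r w] by (simp add: scaleR_conv_of_real)
      have lin2: "pc (w1 - w2) = pc w1 - pc w2" "pc (w1 + w2) = pc w1 + pc w2" for w1 w2
        using linear_diff[OF bounded_linear.linear[OF blc]] linear_add[OF bounded_linear.linear[OF blc]] by auto
      have h1: "pc (U l) - pc (U l0) = (Re l - Re l0) * pc (P l l0) - (Im l - Im l0) * pc (Q l l0)"
        by (subst lin2(1)[symmetric], subst i1, simp only: lin2 lin)
      have h2: "pc (V l) - pc (V l0) = (Re l - Re l0) * pc (Q l l0) + (Im l - Im l0) * pc (P l l0)"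
        by (subst lin2(1)[symmetric], subst i2, simp only: lin2 lin)
      have "Psi l - Psi l0 = (l - l0) * Complex (pc (P l l0)) (pc (Q l l0))"
        unfolding Psi_def complex_eq_iff using h1 h2
        by (simp add: algebra_simps)
      thus ?thesis using that by simp
    qed
    have lim: "((\<lambda>l. Complex (pc (P l l0)) (pc (Q l l0))) \<longlongrightarrow> Complex (pc (P l0 l0)) (pc (Q l0 l0))) (at l0)"
      unfolding P_def Q_def
      using contU[of l0] contV[of l0]
      by (intro tendsto_Complex bounded_linear.tendsto[OF blc] tendsto_intros)
         (auto simp: isCont_def)
    show ?thesis
      unfolding has_field_derivative_iff
      by (rule Lim_transform_within[OF lim zero_less_one]) (simp add: eq)
  qed
  have hol: "Psi holomorphic_on UNIV"
    using diff by (meson field_differentiable_def holomorphic_on_def field_differentiable_at_within)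
  obtain K where K: "\<And>w. norm (pc w) \<le> norm w * K" and Kpos: "K > 0"
    using bounded_linear.pos_bounded[OF blc] by blast
  have Dlow: "norm (D l) \<ge> norm l ^ 2 - 2 * norm l * norm y - norm y ^ 2" for l
  proof -
    have "D l = of_real (Re l * Re l + Im l * Im l) - (of_real (2*Re l) * y - y*y)"
      unfolding D_def by (simp add: algebra_simps)
    hence "norm (D l) \<ge> norm (of_real (Re l * Re l + Im l * Im l) :: 'k) - norm (of_real (2*Re l) * y - y*y)"
      by (metis norm_triangle_ineq2)
    moreover have "norm (of_real (Re l * Re l + Im l * Im l) :: 'k) = norm l ^ 2"
    proof -
      have e: "Re l * Re l + Im l * Im l = norm l ^ 2" using cmod_power2[of l] by (simp add: power2_eq_square)
      have "norm (of_real (Re l * Re l + Im l * Im l) :: 'k) = \<bar>norm l ^ 2\<bar>" by (simp only: norm_of_real e)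
      thus ?thesis by simp
    qed
    moreover have "norm (of_real (2*Re l) * y - y*y) \<le> 2 * norm l * norm y + norm y ^ 2"
    proof -
      have "norm (of_real (2*Re l) * y - y*y) \<le> norm (of_real (2*Re l) * y) + norm (y*y)"
        by (rule norm_triangle_ineq4)
      also have "\<dots> = 2 * \<bar>Re l\<bar> * norm y + norm y ^ 2"
        by (simp add: norm_mult power2_eq_square)
      also have "\<dots> \<le> 2 * norm l * norm y + norm y ^ 2"
        using abs_Re_le_cmod[of l] by (simp add: mult_right_mono)
      finally show ?thesis .
    qed
    ultimately show ?thesis by linarith
  qed
  have inf: "(Psi \<longlongrightarrow> 0) at_infinity"
    unfolding Lim_at_infinity
  proof (intro allI impI)
    fix e :: real assume e: "e > 0"
    define R where "R = 8 * norm y + 1 + 12 * K / e"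
    show "\<exists>b. \<forall>x. b \<le> norm x \<longrightarrow> dist (Psi x) 0 < e"
    proof (intro exI allI impI)
      fix l :: complex assume Rl: "R \<le> norm l"
      define r where "r = norm l"
      have r1: "r \<ge> 8 * norm y + 1" "r \<ge> 12 * K / e" using Rl e Kpos unfolding R_def r_def
        by (auto intro: order_trans[rotated])
      have rpos: "r > 0" using r1(1) norm_ge_zero[of y] by linarith
      have "r^2 - 2*r*norm y - norm y ^2 \<ge> r^2/2"
      proof -
        have "2*r*norm y \<le> r^2/4" proof -
          have "2 * norm y \<le> r/4" using r1(1) norm_ge_zero[of y] by linarith
          hence "r * (2 * norm y) \<le> r * (r/4)" using rpos by (intro mult_left_mono) auto
          thus ?thesis by (simp add: power2_eq_square algebra_simps)
        qed
        moreover have "norm y ^2 \<le> r^2/4"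
        proof -
          have "norm y \<le> r/2" using r1(1) norm_ge_zero[of y] by linarith
          hence "norm y ^ 2 \<le> (r/2)^2" by (intro power_mono) auto
          thus ?thesis by (simp add: power2_eq_square)
        qed
        ultimately show ?thesis by linarith
      qed
      hence Dl: "norm (D l) \<ge> r^2/2" using Dlow[of l] unfolding r_def by linarith
      have Dpos: "norm (D l) > 0" using Dl rpos by (metis half_gt_zero order_less_le_trans zero_less_power)
      have nU: "norm (U l) \<le> 2 * r / (r^2/2)"
      proof -
        have "norm (y - of_real (Re l)) \<le> norm y + \<bar>Re l\<bar>"
          by (metis norm_of_real norm_triangle_ineq4)
        also have "\<dots> \<le> 2 * r" using r1 abs_Re_le_cmod[of l] unfolding r_def by linarith
        finally have "norm (y - of_real (Re l)) \<le> 2*r" .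
        thus ?thesis unfolding U_def norm_divide
          using Dl Dpos rpos by (intro frac_le) auto
      qed
      have nV: "norm (V l) \<le> 2 * r / (r^2/2)"
      proof -
        have "norm (of_real (Im l) :: 'k) \<le> 2 * r" using abs_Im_le_cmod[of l] rpos unfolding r_def by simp
        thus ?thesis unfolding V_def norm_divide
          using Dl Dpos rpos by (intro frac_le) auto
      qed
      have "norm (Psi l) \<le> \<bar>pc (U l)\<bar> + \<bar>pc (V l)\<bar>"
        unfolding Psi_def using cmod_le[of "Complex (pc (U l)) (pc (V l))"] by simp
      also have "\<dots> \<le> norm (U l) * K + norm (V l) * K" using K[of "U l"] K[of "V l"] by simp
      also have "\<dots> \<le> (2 * r / (r^2/2)) * K + (2 * r / (r^2/2)) * K"
        using nU nV Kpos by (intro add_mono mult_right_mono) auto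
      also have "\<dots> = 8 * K / r" using rpos by (simp add: power2_eq_square field_simps)
      also have "\<dots> < e"
      proof -
        have "8 * K < e * r" using r1 e Kpos by (simp add: field_simps) 
        thus ?thesis using rpos by (simp add: field_simps)
      qed
      finally show "dist (Psi l) 0 < e" by simp
    qed
  qed
  have "Psi 0 = 0" using Liouville_weak[OF hol inf] .
  moreover have "y \<noteq> 0" using H[of 0 0] by auto
  hence "pc (U 0) = 1" unfolding pc_def U_def D_def using psi1 by simp
  ultimately show False unfolding Psi_def by (simp add: complex_eq_iff)
qed



lemma sq_real_root:
  fixes w :: "'k::real_normed_field"
  assumes "w*w = of_real d" "d \<ge> 0"
  shows "\<exists>r. w = of_real r"
proof -
  have sq: "of_real (sqrt d) * of_real (sqrt d) = (of_real d :: 'k)"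
    using assms by (metis of_real_mult real_sqrt_mult_self abs_of_nonneg)
  have "(w - of_real (sqrt d)) * (w + of_real (sqrt d)) = w*w - of_real (sqrt d) * of_real (sqrt d)"
    by (simp add: algebra_simps)
  hence "(w - of_real (sqrt d)) * (w + of_real (sqrt d)) = 0" using assms sq by simp
  thus ?thesis
    by (metis add_eq_0_iff2 divisors_zero eq_iff_diff_eq_0 of_real_minus)
qed

lemma decomp_elem:
  fixes c :: "'k::real_normed_field"
  assumes "c*c - of_real s * c + of_real t = 0"
  shows "(\<exists>r. c = of_real r) \<or> (\<exists>j a b. j*j = -1 \<and> c = of_real a + of_real b * j)"
proof -
  define w where "w = c - of_real (s/2)"
  define d :: real where "d = s * s/4 - t"
  have w2: "w*w = of_real d"
  proof -
    have a1: "(2::'k) * of_real (s/2) = of_real (2 * (s/2))" by (simp only: of_real_mult of_real_numeral)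
    have a2: "(of_real (s/2) :: 'k) * of_real (s/2) = of_real (s/2 * (s/2))" by (simp only: of_real_mult)
    have "w*w = c*c - 2 * of_real (s/2) * c + of_real (s/2) * of_real (s/2)"
      unfolding w_def by (simp add: algebra_simps)
    also have "\<dots> = c*c - of_real s * c + of_real (s * s/4)"
      unfolding a2 a1 by simp
    also have "\<dots> = (c*c - of_real s * c + of_real t) + (of_real (s * s/4) - of_real t)"
      by (simp add: algebra_simps)
    also have "\<dots> = of_real d" unfolding assms d_def of_real_diff by simp
    finally show ?thesis .
  qed
  show ?thesis
  proof (cases "d \<ge> 0")
    case True
    then obtain r where "w = of_real r" using sq_real_root[OF w2] by blast
    hence "c = of_real (r + s/2)" unfolding w_def by (simp add: algebra_simps)
    thus ?thesis by blast
  next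
    case False
    define q where "q = sqrt (-d)"
    have qpos: "q > 0" using False unfolding q_def by simp
    define j where "j = w / of_real q"
    have "j*j = of_real d / of_real (q*q)" unfolding j_def using w2 by (simp add: field_simps)
    also have "q*q = -d" unfolding q_def using False by simp
    finally have "j*j = -1" using False by (simp add: field_simps)
    moreover have "c = of_real (s/2) + of_real q * j" unfolding j_def w_def using qpos by simp
    ultimately show ?thesis by blast
  qed
qed

lemma sqrt_m1_unique:
  fixes i j :: "'k::real_normed_field"
  assumes "i*i = -1" "j*j = -1"
  shows "j = i \<or> j = -i"
proof -
  have "(j - i) * (j + i) = 0" using assms by (simp add: algebra_simps)
  hence "j - i = 0 \<or> j + i = 0" by simp
  thus ?thesis using eq_neg_iff_add_eq_0[of j i] right_minus_eq[of j i] by blast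
qed

lemma field_struct:
  fixes psi :: "'k::real_normed_field \<Rightarrow> real"
  assumes quad: "\<And>y::'k. \<exists>s t::real. y*y - of_real s * y + of_real t = 0"
  shows "(\<forall>c::'k. \<exists>r. c = of_real r) \<or> (\<exists>i::'k. i*i = -1 \<and> (\<forall>c. \<exists>a b. c = of_real a + of_real b * i))"
proof (cases "\<forall>c::'k. \<exists>r. c = of_real r")
  case True thus ?thesis by blast
next
  case False
  then obtain c0 :: 'k where c0: "\<nexists>r. c0 = of_real r" by blast
  obtain s t where "c0*c0 - of_real s * c0 + of_real t = 0" using quad by blast
  from decomp_elem[OF this] c0 obtain i :: 'k where i: "i*i = -1" by blast
  have "\<exists>a b. c = of_real a + of_real b * i" for c
  proof -
    obtain s t where "c*c - of_real s * c + of_real t = 0" using quad by blast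
    from decomp_elem[OF this] show ?thesis
    proof
      assume "\<exists>r. c = of_real r"
      then obtain r where "c = of_real r" by blast
      hence "c = of_real r + of_real 0 * i" by simp
      thus ?thesis by blast
    next
      assume "\<exists>j a b. j*j = -1 \<and> c = of_real a + of_real b * j"
      then obtain j a b where j: "j*j = -1" "c = of_real a + of_real b * j" by blast
      from sqrt_m1_unique[OF i j(1)] show ?thesis
      proof
        assume "j = i" thus ?thesis using j by blast
      next
        assume "j = -i" hence "c = of_real a + of_real (-b) * i" using j by simp
        thus ?thesis by blast
      qed
    qed
  qed
  thus ?thesis using i by blast
qed

lemma riesz_k:
  fixes psi :: "'k::real_normed_field \<Rightarrow> real" and l :: "'k \<Rightarrow> real"
  assumes quad: "\<And>y::'k. \<exists>s t::real. y*y - of_real s * y + of_real t = 0"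
    and lp: "linear psi" and p1: "psi 1 = 1" and ll: "linear l"
  shows "\<exists>z. \<forall>c. psi (c * z) = l c"
proof -
  have psr: "psi (of_real r * w) = r * psi w" for r w
    using linear_scale[OF lp, of r w] by (simp add: scaleR_conv_of_real)
  have lr: "l (of_real r * w) = r * l w" for r w
    using linear_scale[OF ll, of r w] by (simp add: scaleR_conv_of_real)
  have psa: "psi (a + b) = psi a + psi b" for a b using linear_add[OF lp] by auto
  have la: "l (a + b) = l a + l b" for a b using linear_add[OF ll] by auto
  from field_struct[OF quad] show ?thesis
  proof
    assume A: "\<forall>c::'k. \<exists>r. c = of_real r"
    show ?thesis
    proof (intro exI allI)
      fix c :: 'k
      obtain r where r: "c = of_real r" using A by blast
      have "psi (c * of_real (l 1)) = psi (of_real (r * l 1) * 1)" using r by simp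
      also have "\<dots> = r * l 1" using psr[of "r * l 1" 1] p1 by simp
      also have "\<dots> = l c" using lr[of r 1] r by simp
      finally show "psi (c * of_real (l 1)) = l c" .
    qed
  next
    assume "\<exists>i::'k. i*i = -1 \<and> (\<forall>c. \<exists>a b. c = of_real a + of_real b * i)"
    then obtain i :: 'k where i: "i*i = -1" and B: "\<And>c. \<exists>a b. c = of_real a + of_real b * i" by blast
    define p where "p = psi i"
    define b0 where "b0 = (l 1 * p - l i) / (1 + p*p)"
    define a0 where "a0 = l 1 - b0 * p"
    have pp: "1 + p*p > 0" by (smt (verit) zero_le_square)
    have e1: "a0 + b0 * p = l 1" unfolding a0_def by simp
    have bb: "b0 * (1 + p*p) = l 1 * p - l i" unfolding b0_def using pp by simp
    have "a0 * p - b0 = l 1 * p - b0 * (1 + p*p)" unfolding a0_def by (simp add: algebra_simps)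
    hence e2: "a0 * p - b0 = l i" using bb by simp
    show ?thesis
    proof (intro exI allI)
      fix c :: 'k
      obtain a b where c: "c = of_real a + of_real b * i" using B by blast
      have "c * (of_real a0 + of_real b0 * i) = of_real (a*a0 - b*b0) * 1 + of_real (a*b0 + b*a0) * i"
      proof -
        have "c * (of_real a0 + of_real b0 * i) = of_real a * of_real a0 + of_real b * of_real b0 * (i*i) + (of_real a * of_real b0 + of_real b * of_real a0) * i"
          unfolding c by (simp add: algebra_simps)
        also have "\<dots> = of_real (a*a0 - b*b0) * 1 + of_real (a*b0 + b*a0) * i"
          unfolding i by simp
        finally show ?thesis .
      qed
      hence "psi (c * (of_real a0 + of_real b0 * i)) = (a*a0 - b*b0) * psi 1 + (a*b0 + b*a0) * psi i"
        by (simp only: psa psr)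
      hence "psi (c * (of_real a0 + of_real b0 * i)) = (a*a0 - b*b0) + (a*b0 + b*a0) * p"
        unfolding p_def p1 by simp
      also have "\<dots> = a * (a0 + b0*p) + b * (a0 * p - b0)" by (simp add: algebra_simps)
      also have "\<dots> = l c" unfolding e1 e2 c using la lr[of a 1] lr[of b i] by simp
      finally show "psi (c * (of_real a0 + of_real b0 * i)) = l c" .
    qed
  qed
qed



lemma sm_simple: "simple_function M h \<Longrightarrow> strongly_measurable M h"
  unfolding strongly_measurable_def by (intro exI[of _ "\<lambda>n. h"]) auto

lemma sm_comp:
  fixes \<phi> :: "'x::real_normed_vector \<Rightarrow> 'y::real_normed_vector"
  assumes "strongly_measurable M f" "continuous_on UNIV \<phi>"
  shows "strongly_measurable M (\<lambda>s. \<phi> (f s))"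
proof -
  obtain u where u: "\<And>n. simple_function M (u n)" "AE s in M. (\<lambda>n. u n s) \<longlonglongrightarrow> f s"
    using assms(1) unfolding strongly_measurable_def by blast
  have c: "isCont \<phi> x" for x using assms(2) by (simp add: continuous_on_eq_continuous_at)
  show ?thesis unfolding strongly_measurable_def
  proof (intro exI[of _ "\<lambda>n s. \<phi> (u n s)"] conjI allI)
    show "simple_function M (\<lambda>s. \<phi> (u n s))" for n using u(1) by (rule simple_function_compose1)
    show "AE s in M. (\<lambda>n. \<phi> (u n s)) \<longlonglongrightarrow> \<phi> (f s)"
      using u(2) by eventually_elim (rule isCont_tendsto_compose[OF c])
  qed
qed

lemma sm_add:
  fixes f g :: "'s \<Rightarrow> 'x::real_normed_vector"
  assumes "strongly_measurable M f" "strongly_measurable M g"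
  shows "strongly_measurable M (\<lambda>s. f s + g s)"
proof -
  obtain u where u: "\<And>n. simple_function M (u n)" "AE s in M. (\<lambda>n. u n s) \<longlonglongrightarrow> f s"
    using assms(1) unfolding strongly_measurable_def by blast
  obtain v where v: "\<And>n. simple_function M (v n)" "AE s in M. (\<lambda>n. v n s) \<longlonglongrightarrow> g s"
    using assms(2) unfolding strongly_measurable_def by blast
  show ?thesis unfolding strongly_measurable_def
  proof (intro exI[of _ "\<lambda>n s. u n s + v n s"] conjI allI)
    show "simple_function M (\<lambda>s. u n s + v n s)" for n using u(1) v(1) by (rule simple_function_compose2)
    show "AE s in M. (\<lambda>n. u n s + v n s) \<longlonglongrightarrow> f s + g s"
      using u(2) v(2) by eventually_elim (rule tendsto_add)
  qed
qed

lemma sm_borel: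
  fixes g :: "'s \<Rightarrow> real"
  assumes cm: "complete_measure M" and sm: "strongly_measurable M g"
  shows "g \<in> borel_measurable M"
proof -
  obtain u where u: "\<And>n. simple_function M (u n)" "AE s in M. (\<lambda>n. u n s) \<longlonglongrightarrow> g s"
    using sm unfolding strongly_measurable_def by blast
  obtain N where N0: "{s \<in> space M. \<not> (\<lambda>n. u n s) \<longlonglongrightarrow> g s} \<subseteq> N" "emeasure M N = 0" "N \<in> sets M"
    using u(2) by (rule AE_E)
  have N: "N \<in> null_sets M" "{s \<in> space M. \<not> (\<lambda>n. u n s) \<longlonglongrightarrow> g s} \<subseteq> N"
    using N0 by auto
  have NM: "N \<in> sets M" using N(1) by auto
  define g' where "g' = (\<lambda>s. if s \<in> N then 0 else g s)"
  have g'm: "g' \<in> borel_measurable M"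
  proof (rule borel_measurable_LIMSEQ_real)
    show "(\<lambda>n. if s \<in> N then 0 else u n s) \<longlonglongrightarrow> g' s" if "s \<in> space M" for s
      using that N(2) unfolding g'_def by auto
    show "(\<lambda>s. if s \<in> N then 0 else u n s) \<in> borel_measurable M" for n
      using NM borel_measurable_simple_function[OF u(1)[of n]]
      by (intro measurable_If_set) auto
  qed
  show ?thesis
  proof (rule borel_measurableI)
    fix S :: "real set" assume "open S"
    have A: "g' -` S \<inter> space M \<in> sets M" using g'm \<open>open S\<close> by (simp add: borel_open measurable_sets)
    have ae: "AE s in M. s \<notin> N" using N(1) by (rule AE_not_in)
    have "AE x in M. (x \<in> g' -` S \<inter> space M) \<longleftrightarrow> (x \<in> g -` S \<inter> space M)"
      using ae by eventually_elim (auto simp: g'_def)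
    thus "g -` S \<inter> space M \<in> sets M"
      using complete_measure.in_sets_AE[OF cm _ A, of "g -` S \<inter> space M"] by auto
  qed
qed

lemma sm_norm_borel:
  assumes cm: "complete_measure M" and sm: "strongly_measurable M (f::'s \<Rightarrow> 'x::real_normed_vector)"
  shows "(\<lambda>s. norm (f s)) \<in> borel_measurable M"
  by (rule sm_borel[OF cm sm_comp[OF sm]]) (intro continuous_intros)

lemma L1_int:
  assumes cm: "complete_measure M" and f: "f \<in> L1set M"
  shows "integrable M (\<lambda>s. norm (f s))" and "L1norm M f = integral\<^sup>L M (\<lambda>s. norm (f s))"
proof -
  have m: "(\<lambda>s. norm (f s)) \<in> borel_measurable M"
    using f sm_norm_borel[OF cm] unfolding L1set_def by auto
  show i: "integrable M (\<lambda>s. norm (f s))"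
    unfolding integrable_iff_bounded using m f unfolding L1set_def by auto
  have "(\<integral>\<^sup>+ s. ennreal (norm (f s)) \<partial>M) = ennreal (integral\<^sup>L M (\<lambda>s. norm (f s)))"
    by (rule nn_integral_eq_integral[OF i]) auto
  thus "L1norm M f = integral\<^sup>L M (\<lambda>s. norm (f s))"
    unfolding L1norm_def by simp
qed

lemma L1set_bound:
  assumes cm: "complete_measure M" and sm: "strongly_measurable M k"
    and f: "f \<in> L1set M" and g: "g \<in> L1set M"
    and b: "\<And>s. norm (k s) \<le> \<alpha> * norm (f s) + \<beta> * norm (g s)" and "\<alpha> \<ge> 0" "\<beta> \<ge> 0"
  shows "k \<in> L1set M"
proof -
  have i: "integrable M (\<lambda>s. \<alpha> * norm (f s) + \<beta> * norm (g s))"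
    using L1_int(1)[OF cm f] L1_int(1)[OF cm g] by auto
  have "integrable M (\<lambda>s. norm (k s))"
    by (rule Bochner_Integration.integrable_bound[OF i sm_norm_borel[OF cm sm]])
       (use b assms(6,7) in \<open>auto intro!: always_eventually\<close>)
  thus ?thesis using sm unfolding L1set_def integrable_iff_bounded by auto
qed



definition Dn :: "'x::real_normed_vector \<Rightarrow> 'x \<Rightarrow> real" where
  "Dn x = (SOME \<phi>. (norm has_derivative \<phi>) (at x))"

lemma Dn_deriv:
  assumes "frechet_diff_norm TYPE('x::real_normed_vector)" "(x::'x) \<noteq> 0"
  shows "(norm has_derivative Dn x) (at x)"
  using assms unfolding frechet_diff_norm_def Dn_def by (metis someI_ex)

lemma Dn_bl:
  assumes "frechet_diff_norm TYPE('x::real_normed_vector)" "(x::'x) \<noteq> 0"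
  shows "bounded_linear (Dn x)"
  using Dn_deriv[OF assms] by (rule has_derivative_bounded_linear)

lemma Dn_dir:
  assumes "frechet_diff_norm TYPE('x::real_normed_vector)" "(x::'x) \<noteq> 0"
  shows "((\<lambda>t. norm (x + t *\<^sub>R v)) has_real_derivative Dn x v) (at 0)"
proof -
  have d1: "((\<lambda>t::real. x + t *\<^sub>R v) has_derivative (\<lambda>t. t *\<^sub>R v)) (at 0)"
    by (auto intro!: derivative_eq_intros)
  have d2: "(norm has_derivative Dn x) (at (x + 0 *\<^sub>R v))" using Dn_deriv[OF assms] by simp
  have "((\<lambda>t. norm (x + t *\<^sub>R v)) has_derivative (\<lambda>t. Dn x (t *\<^sub>R v))) (at 0)"
    using has_derivative_compose[OF d1 d2] by (simp add: o_def)
  moreover have "(\<lambda>t. Dn x (t *\<^sub>R v)) = (*) (Dn x v)"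
    using linear_scale[OF bounded_linear.linear[OF Dn_bl[OF assms]]] by (auto simp: mult.commute)
  ultimately show ?thesis unfolding has_field_derivative_def by simp
qed

lemma Dn_bound:
  assumes "frechet_diff_norm TYPE('x::real_normed_vector)" "(x::'x) \<noteq> 0"
  shows "\<bar>Dn x v\<bar> \<le> norm v"
proof -
  have "((\<lambda>h. (norm (x + (0 + h) *\<^sub>R v) - norm (x + 0 *\<^sub>R v)) / h) \<longlongrightarrow> Dn x v) (at 0)"
    using Dn_dir[OF assms, of v] unfolding DERIV_def .
  hence l: "((\<lambda>h. \<bar>(norm (x + h *\<^sub>R v) - norm x) / h\<bar>) \<longlongrightarrow> \<bar>Dn x v\<bar>) (at 0)"
    by (intro tendsto_rabs) simp
  have b: "\<bar>(norm (x + h *\<^sub>R v) - norm x) / h\<bar> \<le> norm v" if "h \<noteq> 0" for h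
  proof -
    have "\<bar>norm (x + h *\<^sub>R v) - norm x\<bar> \<le> norm (h *\<^sub>R v)"
      by (metis add_diff_cancel_left' norm_triangle_ineq3)
    thus ?thesis using that by (simp add: abs_divide divide_le_eq mult.commute)
  qed
  have ev: "\<forall>\<^sub>F h in at (0::real). \<bar>(norm (x + h *\<^sub>R v) - norm x) / h\<bar> \<le> norm v"
    unfolding eventually_at_filter by (intro always_eventually allI impI b)
  show ?thesis
    by (rule tendsto_le[OF _ tendsto_const l ev]) simp
qed

lemma sc_props:
  assumes "scalar_action (sc :: 'k::real_normed_field \<Rightarrow> 'x::real_normed_vector \<Rightarrow> 'x)"
  shows "sc a (x + y) = sc a x + sc a y" "sc (a + b) x = sc a x + sc b x"
    "sc (a * b) x = sc a (sc b x)" "sc (of_real r) x = r *\<^sub>R x" "norm (sc a x) = norm a * norm x"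
    "sc 1 x = x" "sc a 0 = 0" "sc 0 x = 0"
proof -
  show "sc a (x + y) = sc a x + sc a y" "sc (a + b) x = sc a x + sc b x"
    "sc (a * b) x = sc a (sc b x)" "sc (of_real r) x = r *\<^sub>R x" "norm (sc a x) = norm a * norm x"
    using assms unfolding scalar_action_def by auto
  show "sc 1 x = x" using assms unfolding scalar_action_def by (metis of_real_1 scaleR_one)
  show "sc a 0 = 0" using assms unfolding scalar_action_def by (metis mult_zero_right norm_eq_zero)
  show "sc 0 x = 0" using assms unfolding scalar_action_def by (metis mult_zero_left norm_eq_zero norm_zero)
qed

definition psi_of :: "('k::real_normed_field \<Rightarrow> 'x::real_normed_vector \<Rightarrow> 'x) \<Rightarrow> 'x \<Rightarrow> 'k \<Rightarrow> real" where
  "psi_of sc x0 c = Dn x0 (sc c x0) / norm x0"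

lemma sc_line:
  assumes "scalar_action (sc :: 'k::real_normed_field \<Rightarrow> 'x::real_normed_vector \<Rightarrow> 'x)"
  shows "x + t *\<^sub>R sc c x = sc (1 + of_real t * c) x"
  using sc_props[OF assms] by simp

lemma psi_deriv:
  assumes sc: "scalar_action (sc :: 'k::real_normed_field \<Rightarrow> 'x::real_normed_vector \<Rightarrow> 'x)"
    and fd: "frechet_diff_norm TYPE('x)" and x0: "x0 \<noteq> 0"
  shows "((\<lambda>t. norm (1 + of_real t * c :: 'k)) has_real_derivative psi_of sc x0 c) (at 0)"
proof -
  have "(\<lambda>t. norm (1 + of_real t * c :: 'k)) = (\<lambda>t. norm (x0 + t *\<^sub>R sc c x0) / norm x0)"
    using x0 by (auto simp: sc_line[OF sc] sc_props(5)[OF sc])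
  thus ?thesis unfolding psi_of_def using DERIV_cdivide[OF Dn_dir[OF fd x0]] by simp
qed

lemma psi_linear:
  assumes sc: "scalar_action (sc :: 'k::real_normed_field \<Rightarrow> 'x::real_normed_vector \<Rightarrow> 'x)"
    and fd: "frechet_diff_norm TYPE('x)" and x0: "x0 \<noteq> 0"
  shows "bounded_linear (psi_of sc x0)"
proof -
  have L: "linear (Dn x0)" using bounded_linear.linear[OF Dn_bl[OF fd x0]] .
  have lin: "linear (psi_of sc x0)"
  proof (rule linearI)
    fix a b :: 'k
    show "psi_of sc x0 (a + b) = psi_of sc x0 a + psi_of sc x0 b"
      unfolding psi_of_def sc_props(2)[OF sc] linear_add[OF L] by (simp add: add_divide_distrib)
  next
    fix r :: real and a :: 'k
    have "sc (r *\<^sub>R a) x0 = r *\<^sub>R sc a x0"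
      unfolding scaleR_conv_of_real sc_props(3)[OF sc] sc_props(4)[OF sc] ..
    thus "psi_of sc x0 (r *\<^sub>R a) = r *\<^sub>R psi_of sc x0 a"
      unfolding psi_of_def using linear_scale[OF L] by simp
  qed
  show ?thesis
  proof (rule bounded_linear.intro[OF lin], unfold_locales, intro exI allI)
    fix c :: 'k
    have "\<bar>Dn x0 (sc c x0)\<bar> \<le> norm c * norm x0" using Dn_bound[OF fd x0, of "sc c x0"] sc_props(5)[OF sc] by simp
    thus "norm (psi_of sc x0 c) \<le> norm c * 1"
      unfolding psi_of_def using x0 by (simp add: abs_divide divide_le_eq)
  qed
qed

lemma psi_one:
  assumes sc: "scalar_action (sc :: 'k::real_normed_field \<Rightarrow> 'x::real_normed_vector \<Rightarrow> 'x)"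
    and fd: "frechet_diff_norm TYPE('x)" and x0: "x0 \<noteq> 0"
  shows "psi_of sc x0 1 = 1"
proof -
  have d: "((\<lambda>t. 1 + t) has_real_derivative 1) (at 0)" by (auto intro!: derivative_eq_intros)
  have "((\<lambda>t. norm (1 + of_real t * 1 :: 'k)) has_real_derivative 1) (at 0)"
  proof (rule has_field_derivative_transform_within_open[OF d, of "{-1<..}"])
    fix t :: real assume "t \<in> {-1<..}"
    hence "1 + t \<ge> 0" by simp
    have "(1 + of_real t * 1 :: 'k) = of_real (1 + t)" by simp
    hence "norm (1 + of_real t * 1 :: 'k) = norm (of_real (1 + t) :: 'k)" by (simp only:)
    also have "\<dots> = 1 + t" using \<open>1 + t \<ge> 0\<close> by (simp only: norm_of_real)
    finally show "1 + t = norm (1 + of_real t * 1 :: 'k)" by simp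
  qed auto
  thus ?thesis using DERIV_unique psi_deriv[OF sc fd x0, of 1] by blast
qed

lemma Dn_sc:
  assumes sc: "scalar_action (sc :: 'k::real_normed_field \<Rightarrow> 'x::real_normed_vector \<Rightarrow> 'x)"
    and fd: "frechet_diff_norm TYPE('x)" and x0: "x0 \<noteq> 0" and x: "x \<noteq> 0"
  shows "Dn x (sc c x) = norm x * psi_of sc x0 c"
proof -
  have "(\<lambda>t. norm (x + t *\<^sub>R sc c x)) = (\<lambda>t. norm (1 + of_real t * c :: 'k) * norm x)"
    by (auto simp: sc_line[OF sc] sc_props(5)[OF sc])
  hence "((\<lambda>t. norm (x + t *\<^sub>R sc c x)) has_real_derivative psi_of sc x0 c * norm x) (at 0)"
    using DERIV_cmult_right[OF psi_deriv[OF sc fd x0]] by simp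
  thus ?thesis using DERIV_unique Dn_dir[OF fd x] by (metis mult.commute)
qed

lemma squeeze_deriv:
  fixes n N :: "real \<Rightarrow> real"
  assumes N: "(N has_real_derivative d) (at 0)" and n0: "n 0 = N 0" and le: "\<And>t. n t \<le> N t"
    and cv: "\<And>t. 2 * n 0 \<le> n t + n (-t)"
  shows "(n has_real_derivative d) (at 0)"
proof -
  have Q: "((\<lambda>h. (N h - N 0) / h) \<longlongrightarrow> d) (at 0)" using N unfolding DERIV_def by simp
  have u: "(uminus has_real_derivative -1) (at (0::real))" by (auto intro!: derivative_eq_intros)
  have N': "DERIV N (- 0) :> d" using N by simp
  have Nm: "((\<lambda>t. N (-t)) has_real_derivative d * -1) (at 0)"
    using DERIV_chain'[OF u N'] by simp
  have R: "((\<lambda>h. (N 0 - N (-h)) / h) \<longlongrightarrow> d) (at 0)"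
  proof -
    have "((\<lambda>h. (N (-h) - N 0) / h) \<longlongrightarrow> -d) (at 0)" using Nm unfolding DERIV_def by simp
    hence "((\<lambda>h. - ((N (-h) - N 0) / h)) \<longlongrightarrow> - (-d)) (at 0)" by (rule tendsto_minus)
    thus ?thesis by (simp add: minus_divide_left)
  qed
  have lo: "min ((N h - N 0) / h) ((N 0 - N (-h)) / h) \<le> (n h - n 0) / h"
   and hi: "(n h - n 0) / h \<le> max ((N h - N 0) / h) ((N 0 - N (-h)) / h)" if "h \<noteq> 0" for h
  proof -
    have a1: "n h - n 0 \<le> N h - N 0" using le[of h] n0 by simp
    have a2: "n h - n 0 \<ge> N 0 - N (-h)" using cv[of h] le[of "-h"] n0 by simp
    show "min ((N h - N 0) / h) ((N 0 - N (-h)) / h) \<le> (n h - n 0) / h"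
    proof (cases "h > 0")
      case True thus ?thesis using a2 by (simp add: divide_right_mono min.coboundedI2)
    next
      case False hence "h < 0" using that by simp
      thus ?thesis using a1 by (simp add: divide_right_mono_neg min.coboundedI1)
    qed
    show "(n h - n 0) / h \<le> max ((N h - N 0) / h) ((N 0 - N (-h)) / h)"
    proof (cases "h > 0")
      case True thus ?thesis using a1 by (simp add: divide_right_mono max.coboundedI1)
    next
      case False hence "h < 0" using that by simp
      thus ?thesis using a2 by (simp add: divide_right_mono_neg max.coboundedI2)
    qed
  qed
  have "((\<lambda>h. (n h - n 0) / h) \<longlongrightarrow> d) (at 0)"
  proof (rule tendsto_sandwich)
    show "\<forall>\<^sub>F h in at 0. min ((N h - N 0) / h) ((N 0 - N (-h)) / h) \<le> (n h - n 0) / h"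
      using lo by (auto simp: eventually_at_filter)
    show "\<forall>\<^sub>F h in at 0. (n h - n 0) / h \<le> max ((N h - N 0) / h) ((N 0 - N (-h)) / h)"
      using hi by (auto simp: eventually_at_filter)
    show "((\<lambda>h. min ((N h - N 0) / h) ((N 0 - N (-h)) / h)) \<longlongrightarrow> d) (at 0)"
      using tendsto_min[OF Q R] by simp
    show "((\<lambda>h. max ((N h - N 0) / h) ((N 0 - N (-h)) / h)) \<longlongrightarrow> d) (at 0)"
      using tendsto_max[OF Q R] by simp
  qed
  thus ?thesis unfolding DERIV_def by simp
qed

lemma final_contra:
  fixes y :: "'k::real_normed_field" and a d :: real
  assumes a: "a > 0"
    and d1: "((\<lambda>t. norm (of_real a + of_real t * y)) has_real_derivative d) (at 0)"
    and d2: "((\<lambda>t. norm (of_real a + of_real t * (y + of_real a))) has_real_derivative d) (at 0)"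
  shows False
proof -
  define n1 where "n1 = (\<lambda>t. norm (of_real a + of_real t * y))"
  have n10: "n1 0 = a" unfolding n1_def using a by simp
  have dq: "((\<lambda>t. t / (1 + t)) has_real_derivative 1) (at 0)"
    by (auto intro!: derivative_eq_intros)
  have dc: "(n1 has_real_derivative d) (at ((\<lambda>t. t / (1 + t)) 0))" using d1 unfolding n1_def by simp
  have df: "((\<lambda>t. 1 + t) has_real_derivative 1) (at (0::real))" by (auto intro!: derivative_eq_intros)
  have dp: "((\<lambda>t. (1 + t) * n1 (t / (1 + t))) has_real_derivative (1 * n1 (0 / (1 + 0)) + (1 + 0) * (d * 1))) (at 0)"
    using DERIV_mult[OF df DERIV_chain'[OF dq dc]] by simp
  have dp': "((\<lambda>t. norm (of_real a + of_real t * (y + of_real a))) has_real_derivative (a + d)) (at 0)"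
  proof (rule has_field_derivative_transform_within_open[where S="{-1<..}"])
    show "((\<lambda>t. (1 + t) * n1 (t / (1 + t))) has_real_derivative (a + d)) (at 0)"
      using dp n10 by simp
    fix t :: real assume t: "t \<in> {-1<..}"
    hence tp: "1 + t > 0" by simp
    have m: "(of_real (1 + t) :: 'k) * of_real (t / (1 + t)) = of_real t"
    proof -
      have "(1 + t) * (t / (1 + t)) = t" using tp by simp
      thus ?thesis by (metis of_real_mult)
    qed
    have "(of_real (1 + t) :: 'k) * (of_real a + of_real (t / (1 + t)) * y) = of_real (1 + t) * of_real a + (of_real (1 + t) * of_real (t / (1 + t))) * y"
      by (simp only: distrib_left mult.assoc)
    also have "\<dots> = of_real a + of_real t * (y + of_real a)" unfolding m by (simp add: algebra_simps)
    finally have "(of_real a + of_real t * (y + of_real a) :: 'k) = of_real (1 + t) * (of_real a + of_real (t / (1 + t)) * y)"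
      by simp
    hence "norm (of_real a + of_real t * (y + of_real a) :: 'k) = norm (of_real (1 + t) :: 'k) * n1 (t / (1 + t))"
      unfolding n1_def by (simp only: norm_mult)
    also have "norm (of_real (1 + t) :: 'k) = 1 + t" using tp by (simp only: norm_of_real abs_of_pos)
    finally have "norm (of_real a + of_real t * (y + of_real a) :: 'k) = (1 + t) * n1 (t / (1 + t))" .
    thus "(1 + t) * n1 (t / (1 + t)) = norm (of_real a + of_real t * (y + of_real a) :: 'k)" by simp
  qed auto
  from DERIV_unique[OF d2 dp'] a show False by simp
qed



lemma sc_bl:
  assumes sc: "scalar_action (sc :: 'k::real_normed_field \<Rightarrow> 'x::real_normed_vector \<Rightarrow> 'x)"
  shows "bounded_linear (sc c)"
proof (rule bounded_linear_intro[where K="norm c"])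
  show "sc c (x + y) = sc c x + sc c y" for x y using sc_props(1)[OF sc] .
  show "sc c (r *\<^sub>R x) = r *\<^sub>R sc c x" for r x
    using sc_props(3,4)[OF sc] by (metis mult.commute)
  show "norm (sc c x) \<le> norm x * norm c" for x using sc_props(5)[OF sc] by (simp add: mult.commute)
qed

locale L1ctx =
  fixes M :: "'s measure" and sc :: "'k::real_normed_field \<Rightarrow> 'x::banach \<Rightarrow> 'x" and f :: "'s \<Rightarrow> 'x"
  assumes cm: "complete_measure M" and sf: "sigma_finite_measure M" and sc: "scalar_action sc"
    and fd: "frechet_diff_norm TYPE('x)" and fL: "f \<in> L1set M" and fn: "L1norm M f \<noteq> 0"
begin

lemma L1_sm: "g \<in> L1set M \<Longrightarrow> strongly_measurable M g"
  unfolding L1set_def by auto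

lemma L1_normm: "g \<in> L1set M \<Longrightarrow> (\<lambda>s. norm (g s)) \<in> borel_measurable M"
  using sm_norm_borel[OF cm] L1_sm by blast

lemma L1_add: assumes g: "g \<in> L1set M" and h: "h \<in> L1set M" shows "(\<lambda>s. g s + h s) \<in> L1set M"
proof -
  have "strongly_measurable M (\<lambda>s. g s + h s)" using sm_add[OF L1_sm[OF g] L1_sm[OF h]] .
  thus ?thesis by (rule L1set_bound[OF cm _ g h, where \<alpha>=1 and \<beta>=1]) (auto intro: norm_triangle_ineq)
qed

lemma L1_sc: fixes g :: "'s \<Rightarrow> 'x" assumes g: "g \<in> L1set M" shows "(\<lambda>s. sc c (g s)) \<in> L1set M"
proof -
  have "strongly_measurable M (\<lambda>s. sc c (g s))"
    using sm_comp[OF L1_sm[OF g] linear_continuous_on[OF sc_bl[OF sc]]] .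
  thus ?thesis by (rule L1set_bound[OF cm _ g g, where \<alpha>="norm c" and \<beta>=0]) (auto simp: sc_props(5)[OF sc])
qed

lemma L1_scaleR: fixes g :: "'s \<Rightarrow> 'x" assumes "g \<in> L1set M" shows " (\<lambda>s. r *\<^sub>R g s) \<in> L1set M"
  using L1_sc[OF assms, of "of_real r"] by (simp add: sc_props(4)[OF sc])

lemma L1i: "g \<in> L1set M \<Longrightarrow> integrable M (\<lambda>s. norm (g s))"
  using Submission.L1_int(1)[OF cm] .

lemma L1n: "g \<in> L1set M \<Longrightarrow> L1norm M g = integral\<^sup>L M (\<lambda>s. norm (g s))"
  using Submission.L1_int(2)[OF cm] .

lemma L1norm_nonneg: "L1norm M g \<ge> 0"
  unfolding L1norm_def by simp

lemma a_pos: "L1norm M f > 0"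
  using fn L1norm_nonneg[of f] by linarith

lemma ex_x0: "\<exists>x0. x0 \<noteq> (0::'x)"
proof (rule ccontr)
  assume "\<not> ?thesis"
  hence "\<And>s. f s = 0" by blast
  hence "L1norm M f = 0" unfolding L1norm_def by simp
  thus False using fn by simp
qed

definition x0 :: 'x where "x0 = (SOME x. x \<noteq> 0)"
lemma x0: "x0 \<noteq> 0" unfolding x0_def using ex_x0 by (rule someI_ex)

definition psi :: "'k \<Rightarrow> real" where "psi = psi_of sc x0"

lemma psi_bl: "bounded_linear psi" unfolding psi_def using psi_linear[OF sc fd x0] .
lemma psi_1: "psi 1 = 1" unfolding psi_def using psi_one[OF sc fd x0] .

lemma psi_mult_of_real: "psi (c * of_real r) = r * psi c"
  using linear_scale[OF bounded_linear.linear[OF psi_bl], of r c]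
  by (simp add: scaleR_conv_of_real mult.commute)

lemma psi_inj: assumes "\<And>c. psi (c * z1) = psi (c * z2)" shows "z1 = z2"
proof (rule ccontr)
  assume ne: "z1 \<noteq> z2"
  have "psi (inverse (z1 - z2) * z1) - psi (inverse (z1 - z2) * z2) = psi (inverse (z1 - z2) * z1 - inverse (z1 - z2) * z2)"
    using linear_diff[OF bounded_linear.linear[OF psi_bl]] by metis
  also have "inverse (z1 - z2) * z1 - inverse (z1 - z2) * z2 = 1"
    using ne by (simp add: right_diff_distrib[symmetric])
  finally show False using assms psi_1 by simp
qed

definition Eg :: "'s \<Rightarrow> 'x \<Rightarrow> real" where "Eg s v = (if f s = 0 then 0 else Dn (f s) v)"

lemma Eg_bound: "\<bar>Eg s v\<bar> \<le> norm v"
  unfolding Eg_def using Dn_bound[OF fd] by auto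

lemma Eg_add: "Eg s (v + w) = Eg s v + Eg s w"
  unfolding Eg_def using linear_add[OF bounded_linear.linear[OF Dn_bl[OF fd]]] by auto

lemma Eg_scaleR: "Eg s (r *\<^sub>R v) = r * Eg s v"
  unfolding Eg_def using linear_scale[OF bounded_linear.linear[OF Dn_bl[OF fd]]] by auto

lemma Eg_sc_f: "Eg s (sc c (f s)) = norm (f s) * psi c"
  unfolding Eg_def psi_def using Dn_sc[OF sc fd x0] by auto

lemma Eg_lim:
  assumes "f s \<noteq> 0"
  shows "((\<lambda>t. (norm (f s + t *\<^sub>R v) - norm (f s)) / t) \<longlongrightarrow> Eg s v) (at 0)"
  using Dn_dir[OF fd assms, of v] assms unfolding DERIV_def Eg_def by simp

lemma nf_meas: "(\<lambda>s. norm (f s)) \<in> borel_measurable M" by (rule L1_normm[OF fL])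

lemma zset: "{s. f s = 0} \<inter> space M \<in> sets M"
proof -
  have "(\<lambda>s. norm (f s)) -` {0} \<inter> space M \<in> sets M"
    using measurable_sets[OF nf_meas, of "{0}"] by simp
  moreover have "(\<lambda>s. norm (f s)) -` {0} \<inter> space M = {s. f s = 0} \<inter> space M" by auto
  ultimately show ?thesis by simp
qed

lemma quot_meas:
  fixes g :: "'s \<Rightarrow> 'x" assumes g: "g \<in> L1set M"
  shows "(\<lambda>s. (norm (f s + r *\<^sub>R g s) - norm (f s)) / r) \<in> borel_measurable M"
proof -
  have m1: "(\<lambda>s. norm (f s + r *\<^sub>R g s)) \<in> borel_measurable M"
    by (rule L1_normm[OF L1_add[OF fL L1_scaleR[OF g]]])
  show ?thesis using m1 nf_meas by (intro borel_measurable_divide borel_measurable_diff) auto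
qed

lemma Eg_meas:
  fixes g :: "'s \<Rightarrow> 'x" assumes g: "g \<in> L1set M"
  shows "(\<lambda>s. Eg s (g s)) \<in> borel_measurable M"
proof (rule borel_measurable_LIMSEQ_real)
  define X where "X = (\<lambda>n::nat. 1 / real (Suc n))"
  have X0: "X \<longlonglongrightarrow> 0" unfolding X_def using LIMSEQ_Suc[OF lim_1_over_n] by simp
  have Xn: "X n \<noteq> 0" for n unfolding X_def by simp
  show "(\<lambda>n. if s \<in> {s. f s = 0} then 0 else (norm (f s + X n *\<^sub>R g s) - norm (f s)) / X n) \<longlonglongrightarrow> Eg s (g s)" for s
  proof (cases "f s = 0")
    case True thus ?thesis unfolding Eg_def by simp
  next
    case False
    have "((\<lambda>t. (norm (f s + t *\<^sub>R g s) - norm (f s)) / t) \<circ> X) \<longlonglongrightarrow> Eg s (g s)"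
      using Eg_lim[OF False, of "g s"] X0 Xn unfolding tendsto_at_iff_sequentially by auto
    thus ?thesis using False by (simp add: o_def)
  qed
  show "(\<lambda>s. if s \<in> {s. f s = 0} then 0 else (norm (f s + X n *\<^sub>R g s) - norm (f s)) / X n) \<in> borel_measurable M" for n
    by (rule measurable_If_set[OF _ quot_meas[OF g] zset]) simp
qed


lemma L1norm_sc: fixes g :: "'s \<Rightarrow> 'x" assumes g: "g \<in> L1set M"
  shows "L1norm M (\<lambda>s. sc c (g s)) = norm c * L1norm M g"
  unfolding L1n[OF g] L1n[OF L1_sc[OF g]] sc_props(5)[OF sc] by simp

lemma L1norm_scaleR: fixes g :: "'s \<Rightarrow> 'x" assumes g: "g \<in> L1set M"
  shows "L1norm M (\<lambda>s. r *\<^sub>R g s) = \<bar>r\<bar> * L1norm M g"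
  using L1norm_sc[OF g, of "of_real r"] by (simp add: sc_props(4)[OF sc])

definition Phi :: "('s \<Rightarrow> 'x) \<Rightarrow> real" where "Phi g = integral\<^sup>L M (\<lambda>s. Eg s (g s))"

lemma Eg_int: fixes g :: "'s \<Rightarrow> 'x" assumes g: "g \<in> L1set M"
  shows "integrable M (\<lambda>s. Eg s (g s))"
  by (rule Bochner_Integration.integrable_bound[OF L1i[OF g] Eg_meas[OF g]])
     (auto intro!: always_eventually simp: Eg_bound)

lemma Phi_add: fixes g h :: "'s \<Rightarrow> 'x" assumes g: "g \<in> L1set M" and h: "h \<in> L1set M"
  shows "Phi (\<lambda>s. g s + h s) = Phi g + Phi h"
  unfolding Phi_def Eg_add using Bochner_Integration.integral_add[OF Eg_int[OF g] Eg_int[OF h]] .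

lemma Phi_scaleR: "Phi (\<lambda>s. r *\<^sub>R g s) = r * Phi g"
  unfolding Phi_def Eg_scaleR by simp

lemma Phi_bound: fixes g :: "'s \<Rightarrow> 'x" assumes g: "g \<in> L1set M"
  shows "\<bar>Phi g\<bar> \<le> L1norm M g"
proof -
  have "\<bar>Phi g\<bar> \<le> integral\<^sup>L M (\<lambda>s. \<bar>Eg s (g s)\<bar>)"
    unfolding Phi_def by (rule integral_abs_bound)
  also have "\<dots> \<le> integral\<^sup>L M (\<lambda>s. norm (g s))"
    using Eg_int[OF g] L1i[OF g] by (intro integral_mono) (auto simp: Eg_bound)
  finally show ?thesis using L1n[OF g] by simp
qed

lemma Phi_sc_f: "Phi (\<lambda>s. sc c (f s)) = psi c * L1norm M f"
  unfolding Phi_def Eg_sc_f L1n[OF fL] by (simp add: mult.commute)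

lemma Phi_sc_lin: fixes g :: "'s \<Rightarrow> 'x" assumes g: "g \<in> L1set M"
  shows "linear (\<lambda>c. Phi (\<lambda>s. sc c (g s)))"
proof (rule linearI)
  fix a b :: 'k
  show "Phi (\<lambda>s. sc (a + b) (g s)) = Phi (\<lambda>s. sc a (g s)) + Phi (\<lambda>s. sc b (g s))"
    unfolding sc_props(2)[OF sc] by (rule Phi_add[OF L1_sc[OF g] L1_sc[OF g]])
next
  fix r :: real and a :: 'k
  have "(\<lambda>s. sc (r *\<^sub>R a) (g s)) = (\<lambda>s. r *\<^sub>R sc a (g s))"
    unfolding scaleR_conv_of_real sc_props(3)[OF sc] sc_props(4)[OF sc] ..
  thus "Phi (\<lambda>s. sc (r *\<^sub>R a) (g s)) = r *\<^sub>R Phi (\<lambda>s. sc a (g s))"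
    using Phi_scaleR by simp
qed

lemma quad: "\<exists>s t::real. (y::'k)*y - of_real s * y + of_real t = 0"
  by (rule quad_exists[OF psi_bl psi_1])

definition Fs :: "('s \<Rightarrow> 'x) \<Rightarrow> 'k" where
  "Fs g = (SOME z. \<forall>c. psi (c * z) = Phi (\<lambda>s. sc c (g s)))"

lemma Fs_spec: fixes g :: "'s \<Rightarrow> 'x" assumes g: "g \<in> L1set M"
  shows "psi (c * Fs g) = Phi (\<lambda>s. sc c (g s))"
proof -
  have "\<exists>z. \<forall>c. psi (c * z) = Phi (\<lambda>s. sc c (g s))"
    by (rule riesz_k[OF quad bounded_linear.linear[OF psi_bl] psi_1 Phi_sc_lin[OF g]])
  hence "\<forall>c. psi (c * Fs g) = Phi (\<lambda>s. sc c (g s))" unfolding Fs_def by (rule someI_ex)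
  thus ?thesis by blast
qed

lemma psi_add: "psi (a + b) = psi a + psi b"
  using linear_add[OF bounded_linear.linear[OF psi_bl]] by blast

lemma Fs_add: fixes g h :: "'s \<Rightarrow> 'x" assumes g: "g \<in> L1set M" and h: "h \<in> L1set M"
  shows "Fs (\<lambda>s. g s + h s) = Fs g + Fs h"
proof (rule psi_inj)
  fix c
  have "psi (c * Fs (\<lambda>s. g s + h s)) = Phi (\<lambda>s. sc c (g s) + sc c (h s))"
    using Fs_spec[OF L1_add[OF g h], of c] by (simp add: sc_props(1)[OF sc])
  also have "\<dots> = Phi (\<lambda>s. sc c (g s)) + Phi (\<lambda>s. sc c (h s))"
    by (rule Phi_add[OF L1_sc[OF g] L1_sc[OF h]])
  also have "\<dots> = psi (c * (Fs g + Fs h))"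
    unfolding Fs_spec[OF g, symmetric] Fs_spec[OF h, symmetric] distrib_left psi_add ..
  finally show "psi (c * Fs (\<lambda>s. g s + h s)) = psi (c * (Fs g + Fs h))" .
qed

lemma Fs_sc: fixes g :: "'s \<Rightarrow> 'x" assumes g: "g \<in> L1set M"
  shows "Fs (\<lambda>s. sc c' (g s)) = c' * Fs g"
proof (rule psi_inj)
  fix c
  have "psi (c * Fs (\<lambda>s. sc c' (g s))) = Phi (\<lambda>s. sc (c * c') (g s))"
    using Fs_spec[OF L1_sc[OF g], of c] by (simp add: sc_props(3)[OF sc])
  also have "\<dots> = psi (c * (c' * Fs g))"
    unfolding Fs_spec[OF g, symmetric] by (simp add: mult.assoc)
  finally show "psi (c * Fs (\<lambda>s. sc c' (g s))) = psi (c * (c' * Fs g))" .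
qed

lemma psi_of_real: "psi (of_real r) = r"
  using psi_mult_of_real[of 1 r] psi_1 by simp

lemma Fs_bound: fixes g :: "'s \<Rightarrow> 'x" assumes g: "g \<in> L1set M"
  shows "norm (Fs g) \<le> L1norm M g"
proof (cases "Fs g = 0")
  case True thus ?thesis using L1norm_nonneg[of g] by simp
next
  case False
  define c where "c = of_real (norm (Fs g)) / Fs g"
  have cz: "c * Fs g = of_real (norm (Fs g))" unfolding c_def using False by simp
  have nc: "norm c = 1" unfolding c_def using False by (simp add: norm_divide)
  have "norm (Fs g) = psi (c * Fs g)" unfolding cz psi_of_real ..
  also have "\<dots> = Phi (\<lambda>s. sc c (g s))" by (rule Fs_spec[OF g])
  also have "\<dots> \<le> L1norm M (\<lambda>s. sc c (g s))" using Phi_bound[OF L1_sc[OF g], of c] by simp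
  also have "\<dots> = L1norm M g" unfolding L1norm_sc[OF g] nc by simp
  finally show ?thesis .
qed

lemma Fs_f: "Fs f = of_real (L1norm M f)"
proof (rule psi_inj)
  fix c
  show "psi (c * Fs f) = psi (c * of_real (L1norm M f))"
    unfolding Fs_spec[OF fL] Phi_sc_f psi_mult_of_real by simp
qed

lemma Fs_dual: "Fs \<in> L1_dual sc M"
  unfolding L1_dual_def using Fs_add Fs_sc Fs_bound by (auto intro!: exI[of _ 1])

lemma Fs_dual_norm: "dual_norm M Fs = 1"
proof -
  define a where "a = L1norm M f"
  have apos: "a > 0" unfolding a_def using a_pos .
  define g where "g = (\<lambda>s. (1/a) *\<^sub>R f s)"
  have gL: "g \<in> L1set M" unfolding g_def by (rule L1_scaleR[OF fL])
  have gn: "L1norm M g = 1" unfolding g_def L1norm_scaleR[OF fL] using apos unfolding a_def by simp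
  have "Fs g = Fs (\<lambda>s. sc (of_real (1/a)) (f s))" unfolding g_def sc_props(4)[OF sc] ..
  also have "\<dots> = of_real (1/a) * of_real a" unfolding Fs_sc[OF fL] Fs_f a_def ..
  also have "\<dots> = 1" using apos by (simp flip: of_real_mult)
  finally have Fg: "Fs g = 1" .
  show ?thesis unfolding dual_norm_def
  proof (rule cSup_eq_maximum)
    show "1 \<in> (\<lambda>g. norm (Fs g)) ` {g \<in> L1set M. L1norm M g \<le> 1}"
      using gL gn Fg by (auto intro!: image_eqI[of _ _ g])
    show "x \<le> 1" if "x \<in> (\<lambda>g. norm (Fs g)) ` {g \<in> L1set M. L1norm M g \<le> 1}" for x
      using that Fs_bound by (auto intro: order_trans)
  qed
qed

lemma Fs_support: "support_functional sc M f Fs"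
  unfolding support_functional_def using Fs_dual Fs_dual_norm Fs_f by auto


lemma quot_bound: "\<bar>(norm (x + t *\<^sub>R v) - norm x) / t\<bar> \<le> norm (v::'x)"
proof (cases "t = 0")
  case True thus ?thesis by simp
next
  case False
  have "\<bar>norm (x + t *\<^sub>R v) - norm x\<bar> \<le> norm (t *\<^sub>R v)"
    by (metis add_diff_cancel_left' norm_triangle_ineq3)
  thus ?thesis using False by (simp add: abs_divide divide_le_eq mult.commute)
qed

lemma N_deriv:
  fixes h :: "'s \<Rightarrow> 'x" assumes h: "h \<in> L1set M" and ae: "AE s in M. f s \<noteq> 0"
  shows "((\<lambda>t. L1norm M (\<lambda>s. f s + t *\<^sub>R h s)) has_real_derivative Phi h) (at 0)"
proof -
  let ?N = "\<lambda>t. L1norm M (\<lambda>s. f s + t *\<^sub>R h s)"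
  have Nint: "?N t = integral\<^sup>L M (\<lambda>s. norm (f s + t *\<^sub>R h s))" for t
    by (rule L1n[OF L1_add[OF fL L1_scaleR[OF h]]])
  have q: "(?N t - ?N 0) / t = integral\<^sup>L M (\<lambda>s. (norm (f s + t *\<^sub>R h s) - norm (f s)) / t)" for t
  proof -
    have "?N t - ?N 0 = integral\<^sup>L M (\<lambda>s. norm (f s + t *\<^sub>R h s) - norm (f s))"
      unfolding Nint using L1i[OF L1_add[OF fL L1_scaleR[OF h]]] L1i[OF fL]
      by (simp add: Bochner_Integration.integral_diff)
    thus ?thesis by simp
  qed
  have "((\<lambda>t. (?N t - ?N 0) / t) \<longlongrightarrow> Phi h) (at 0)"
    unfolding tendsto_at_iff_sequentially
  proof (intro allI impI)
    fix X :: "nat \<Rightarrow> real" assume Xn: "\<forall>i. X i \<in> UNIV - {0}" and X0: "X \<longlonglongrightarrow> 0"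
    show "((\<lambda>t. (?N t - ?N 0) / t) \<circ> X) \<longlonglongrightarrow> Phi h"
      unfolding o_def q Phi_def
    proof (rule integral_dominated_convergence[where w="\<lambda>s. norm (h s)"])
      show "(\<lambda>s. Eg s (h s)) \<in> borel_measurable M" by (rule Eg_meas[OF h])
      show "(\<lambda>s. (norm (f s + X i *\<^sub>R h s) - norm (f s)) / X i) \<in> borel_measurable M" for i
        by (rule quot_meas[OF h])
      show "integrable M (\<lambda>s. norm (h s))" by (rule L1i[OF h])
      show "AE s in M. (\<lambda>i. (norm (f s + X i *\<^sub>R h s) - norm (f s)) / X i) \<longlonglongrightarrow> Eg s (h s)"
        using ae
      proof eventually_elim
        case (elim s)
        have "((\<lambda>t. (norm (f s + t *\<^sub>R h s) - norm (f s)) / t) \<circ> X) \<longlonglongrightarrow> Eg s (h s)"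
          using Eg_lim[OF elim, of "h s"] Xn X0 unfolding tendsto_at_iff_sequentially by blast
        thus ?case by (simp add: o_def)
      qed
      show "AE s in M. norm ((norm (f s + X i *\<^sub>R h s) - norm (f s)) / X i) \<le> norm (h s)" for i
        using quot_bound by (auto intro!: always_eventually)
    qed
  qed
  thus ?thesis unfolding DERIV_def by simp
qed

lemma G_bound:
  fixes G :: "('s \<Rightarrow> 'x) \<Rightarrow> 'k" and g :: "'s \<Rightarrow> 'x"
  assumes G: "support_functional sc M f G" and g: "g \<in> L1set M"
  shows "norm (G g) \<le> L1norm M g"
proof -
  have GD: "G \<in> L1_dual sc M" and Gn: "dual_norm M G = 1"
    using G unfolding support_functional_def by auto
  obtain K where K: "\<And>g::'s \<Rightarrow> 'x. g \<in> L1set M \<Longrightarrow> norm (G g) \<le> K * L1norm M g"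
    using GD unfolding L1_dual_def by blast
  have Gsc: "\<And>c g. g \<in> L1set M \<Longrightarrow> G (\<lambda>s. sc c (g s)) = c * G g"
    using GD unfolding L1_dual_def by auto
  have bdd: "bdd_above ((\<lambda>g. norm (G g)) ` {g \<in> L1set M. L1norm M g \<le> 1})"
  proof (rule bdd_aboveI2)
    fix g :: "'s \<Rightarrow> 'x" assume "g \<in> {g \<in> L1set M. L1norm M g \<le> 1}"
    hence g: "g \<in> L1set M" "L1norm M g \<le> 1" by auto
    have "K * L1norm M g \<le> max K 0"
      using g(2) L1norm_nonneg[of g]
      by (cases "K \<ge> 0") (auto intro: mult_left_le order_trans[OF mult_nonpos_nonneg])
    thus "norm (G g) \<le> max K 0" using K[OF g(1)] by linarith
  qed
  have le1: "norm (G g) \<le> 1" if "g \<in> L1set M" "L1norm M g \<le> 1" for g :: "'s \<Rightarrow> 'x"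
    using cSUP_upper[OF _ bdd, of g] that Gn unfolding dual_norm_def by auto
  show ?thesis
  proof (cases "L1norm M g = 0")
    case True thus ?thesis using K[OF g] by simp
  next
    case False
    define r where "r = L1norm M g"
    have rpos: "r > 0" using False L1norm_nonneg[of g] unfolding r_def by linarith
    have g1: "(\<lambda>s. sc (of_real (1/r)) (g s)) \<in> L1set M" by (rule L1_sc[OF g])
    have nr: "norm (of_real (1/r) :: 'k) = 1/r" using rpos by (simp only: norm_of_real) simp
    have "L1norm M (\<lambda>s. sc (of_real (1/r)) (g s)) = norm (of_real (1/r) :: 'k) * r"
      unfolding L1norm_sc[OF g] r_def ..
    also have "\<dots> = 1" unfolding nr using rpos by simp
    finally have "L1norm M (\<lambda>s. sc (of_real (1/r)) (g s)) = 1" .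
    hence "norm (G (\<lambda>s. sc (of_real (1/r)) (g s))) \<le> 1" using le1[OF g1] by simp
    hence "(1/r) * norm (G g) \<le> 1" unfolding Gsc[OF g] norm_mult nr .
    thus ?thesis using rpos unfolding r_def by (simp add: field_simps)
  qed
qed

lemma G_line:
  fixes G :: "('s \<Rightarrow> 'x) \<Rightarrow> 'k" and h :: "'s \<Rightarrow> 'x"
  assumes G: "support_functional sc M f G" and h: "h \<in> L1set M"
  shows "norm (of_real (L1norm M f) + of_real t * G h) \<le> L1norm M (\<lambda>s. f s + t *\<^sub>R h s)"
proof -
  have GD: "G \<in> L1_dual sc M" and Gf: "G f = of_real (L1norm M f)"
    using G unfolding support_functional_def by auto
  have Gadd: "G (\<lambda>s. g1 s + g2 s) = G g1 + G g2" if "g1 \<in> L1set M" "g2 \<in> L1set M" for g1 g2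
    using GD that unfolding L1_dual_def by auto
  have Gsc: "G (\<lambda>s. sc c (g s)) = c * G g" if "g \<in> L1set M" for c g
    using GD that unfolding L1_dual_def by auto
  have "(\<lambda>s. t *\<^sub>R h s) = (\<lambda>s. sc (of_real t) (h s))" by (simp add: sc_props(4)[OF sc])
  hence "G (\<lambda>s. f s + t *\<^sub>R h s) = of_real (L1norm M f) + of_real t * G h"
    using Gadd[OF fL L1_scaleR[OF h, of t]] Gsc[OF h, of "of_real t"] Gf by simp
  thus ?thesis using G_bound[OF G L1_add[OF fL L1_scaleR[OF h]], of t] by simp
qed

lemma support_unique:
  fixes G :: "('s \<Rightarrow> 'x) \<Rightarrow> 'k" and g :: "'s \<Rightarrow> 'x"
  assumes G: "support_functional sc M f G" and g: "g \<in> L1set M" and ae: "AE s in M. f s \<noteq> 0"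
  shows "G g = Fs g"
proof (rule ccontr)
  assume ne: "G g \<noteq> Fs g"
  define a where "a = L1norm M f"
  have apos: "a > 0" unfolding a_def using a_pos .
  define c where "c = of_real a / (G g - Fs g)"
  define h where "h = (\<lambda>s. sc c (g s))"
  have hL: "h \<in> L1set M" unfolding h_def by (rule L1_sc[OF g])
  have GD: "G \<in> L1_dual sc M" using G unfolding support_functional_def by auto
  have Gh: "G h = c * G g" unfolding h_def using GD g unfolding L1_dual_def by auto
  have Fh: "Fs h = c * Fs g" unfolding h_def by (rule Fs_sc[OF g])
  define y where "y = Fs h"
  have Gy: "G h = y + of_real a"
  proof -
    have "G h - Fs h = c * (G g - Fs g)" unfolding Gh Fh by (simp add: algebra_simps)
    also have "\<dots> = of_real a" unfolding c_def using ne by simp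
    finally show ?thesis unfolding y_def by (simp add: algebra_simps)
  qed
  define N where "N = (\<lambda>t. L1norm M (\<lambda>s. f s + t *\<^sub>R h s))"
  have ND: "(N has_real_derivative Phi h) (at 0)" unfolding N_def by (rule N_deriv[OF hL ae])
  have N0: "N 0 = a" unfolding N_def a_def by simp
  have conv: "2 * norm (of_real a :: 'k) \<le> norm (of_real a + of_real t * z) + norm (of_real a + of_real (-t) * z)"
    for t and z :: 'k
  proof -
    have "2 * norm (of_real a :: 'k) = norm ((of_real a + of_real t * z) + (of_real a + of_real (-t) * z))"
      using apos by (simp add: norm_mult[symmetric])
    also have "\<dots> \<le> norm (of_real a + of_real t * z) + norm (of_real a + of_real (-t) * z)"
      by (rule norm_triangle_ineq)
    finally show ?thesis .
  qed
  have d1: "((\<lambda>t. norm (of_real a + of_real t * y)) has_real_derivative Phi h) (at 0)"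
  proof (rule squeeze_deriv[OF ND])
    show "norm (of_real a + of_real 0 * y :: 'k) = N 0" unfolding N0 using apos by simp
    show "norm (of_real a + of_real t * y) \<le> N t" for t
      unfolding N_def y_def a_def by (rule G_line[OF Fs_support hL])
    show "2 * norm (of_real a + of_real 0 * y :: 'k) \<le> norm (of_real a + of_real t * y) + norm (of_real a + of_real (- t) * y)" for t
      using conv[of t y] by simp
  qed
  have d2: "((\<lambda>t. norm (of_real a + of_real t * (y + of_real a))) has_real_derivative Phi h) (at 0)"
  proof (rule squeeze_deriv[OF ND])
    show "norm (of_real a + of_real 0 * (y + of_real a) :: 'k) = N 0" unfolding N0 using apos by simp
    show "norm (of_real a + of_real t * (y + of_real a)) \<le> N t" for t
      using G_line[OF G hL, of t] unfolding N_def Gy a_def .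
    show "2 * norm (of_real a + of_real 0 * (y + of_real a) :: 'k) \<le> norm (of_real a + of_real t * (y + of_real a)) + norm (of_real a + of_real (- t) * (y + of_real a))" for t
      using conv[of t "y + of_real a"] by simp
  qed
  show False by (rule final_contra[OF apos d1 d2])
qed


lemma ae_nonzero:
  assumes ls: "left_symmetric sc M f"
  shows "AE s in M. f s \<noteq> 0"
proof (rule ccontr)
  assume nae: "\<not> (AE s in M. f s \<noteq> 0)"
  define Z where "Z = {s. f s = 0} \<inter> space M"
  have ZM: "Z \<in> sets M" unfolding Z_def by (rule zset)
  have "{s \<in> space M. \<not> f s \<noteq> 0} = Z" unfolding Z_def by auto
  hence Zpos: "emeasure M Z \<noteq> 0" using nae AE_iff_measurable[of Z M "\<lambda>s. f s \<noteq> 0"] ZM by auto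
  obtain A :: "nat \<Rightarrow> 's set" where A: "range A \<subseteq> sets M" "(\<Union>i. A i) = space M" "\<And>i. emeasure M (A i) \<noteq> \<infinity>"
    using sigma_finite_measure.sigma_finite[OF sf] by metis
  have "\<exists>i. emeasure M (Z \<inter> A i) \<noteq> 0"
  proof (rule ccontr)
    assume "\<not> ?thesis"
    hence "\<And>i. Z \<inter> A i \<in> null_sets M" using ZM A(1) by auto
    hence "(\<Union>i. Z \<inter> A i) \<in> null_sets M" by (rule null_sets_UN)
    moreover have "(\<Union>i. Z \<inter> A i) = Z" using A(2) unfolding Z_def by auto
    ultimately show False using Zpos by auto
  qed
  then obtain i where Bpos: "emeasure M (Z \<inter> A i) \<noteq> 0" by blast
  define B where "B = Z \<inter> A i"
  have BM: "B \<in> sets M" unfolding B_def using ZM A(1) by auto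
  have Bfin: "emeasure M B \<noteq> \<infinity>" unfolding B_def
    using A(3)[of i] emeasure_mono[of "Z \<inter> A i" "A i" M] A(1) by (auto simp: top_unique)
  have BZ: "s \<in> B \<Longrightarrow> f s = 0" for s unfolding B_def Z_def by auto
  define m where "m = measure M B"
  have Bm: "emeasure M B = ennreal m" unfolding m_def using Bfin by (simp add: emeasure_eq_ennreal_measure)
  have mpos: "m > 0" using Bpos Bm unfolding B_def[symmetric] by (simp add: ennreal_eq_0_iff[symmetric] measure_nonneg m_def less_le)
  define a where "a = L1norm M f"
  have apos: "a > 0" unfolding a_def using a_pos .
  define v where "v = (a / (m * norm x0)) *\<^sub>R x0"
  have nv: "norm v = a / m" unfolding v_def using x0 mpos apos by simp
  define h where "h = (\<lambda>s. indicator B s *\<^sub>R v)"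
  have nh: "norm (h s) = indicator B s * (a / m)" for s unfolding h_def using nv by (simp add: indicator_def)
  have hs: "simple_function M h" unfolding h_def using BM by (intro simple_function_compose1[where g="\<lambda>r. r *\<^sub>R v"]) auto
  have hint: "(\<integral>\<^sup>+ s. ennreal (norm (h s)) \<partial>M) = ennreal (a / m) * emeasure M B"
  proof -
    have "(\<integral>\<^sup>+ s. ennreal (norm (h s)) \<partial>M) = (\<integral>\<^sup>+ s. ennreal (a / m) * indicator B s \<partial>M)"
      unfolding nh by (intro nn_integral_cong) (simp add: indicator_def)
    also have "\<dots> = ennreal (a / m) * emeasure M B" using BM by (rule nn_integral_cmult_indicator)
    finally show ?thesis .
  qed
  have hL: "h \<in> L1set M" unfolding L1set_def using sm_simple[OF hs] hint Bm by (simp add: ennreal_mult_less_top)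
  have hn: "L1norm M h = a" unfolding L1norm_def hint Bm using mpos apos
    by (simp flip: ennreal_mult)
  have hf: "f s = 0 \<or> h s = 0" for s unfolding h_def using BZ by (auto simp: indicator_def)
  define g where "g = (\<lambda>s. f s + h s)"
  have gL: "g \<in> L1set M" unfolding g_def by (rule L1_add[OF fL hL])
  have p1: "norm (f s + sc c (g s)) = norm (1 + c) * norm (f s) + norm c * norm (h s)" for c s
  proof (cases "h s = 0")
    case True
    have "f s + sc c (g s) = sc (1 + c) (f s)" unfolding g_def True using sc_props[OF sc] by simp
    thus ?thesis using True sc_props(5)[OF sc] by simp
  next
    case False hence "f s = 0" using hf by blast
    thus ?thesis unfolding g_def using sc_props(5)[OF sc] by simp
  qed
  have p2: "norm (g s + sc c (f s)) = norm (1 + c) * norm (f s) + norm (h s)" for c s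
  proof (cases "h s = 0")
    case True
    have "g s + sc c (f s) = sc (1 + c) (f s)" unfolding g_def True using sc_props[OF sc] by simp
    thus ?thesis using True sc_props(5)[OF sc] by simp
  next
    case False hence "f s = 0" using hf by blast
    thus ?thesis unfolding g_def using sc_props(7)[OF sc] by simp
  qed
  have lin: "L1norm M k = \<alpha> * a + \<beta> * a"
    if k: "k \<in> L1set M" and pk: "\<And>s. norm (k s) = \<alpha> * norm (f s) + \<beta> * norm (h s)" for k :: "'s \<Rightarrow> 'x" and \<alpha> \<beta>
  proof -
    have "L1norm M k = integral\<^sup>L M (\<lambda>s. \<alpha> * norm (f s) + \<beta> * norm (h s))" unfolding L1n[OF k] pk ..
    also have "\<dots> = \<alpha> * integral\<^sup>L M (\<lambda>s. norm (f s)) + \<beta> * integral\<^sup>L M (\<lambda>s. norm (h s))"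
      using L1i[OF fL] L1i[OF hL] by (simp add: Bochner_Integration.integral_add)
    also have "\<dots> = \<alpha> * a + \<beta> * a" unfolding L1n[OF fL, symmetric] L1n[OF hL, symmetric] hn a_def ..
    finally show ?thesis .
  qed
  have "bj_orth sc M f g"
    unfolding bj_orth_def
  proof
    fix c :: 'k
    have "L1norm M (\<lambda>s. f s + sc c (g s)) = norm (1 + c) * a + norm c * a"
      by (rule lin[OF L1_add[OF fL L1_sc[OF gL]] p1])
    moreover have "1 \<le> norm (1 + c) + norm c"
      using norm_triangle_ineq4[of "1 + c" c] by simp
    ultimately show "L1norm M f \<le> L1norm M (\<lambda>s. f s + sc c (g s))"
      using apos unfolding a_def by (simp add: distrib_right[symmetric])
  qed
  hence "bj_orth sc M g f" using ls gL unfolding left_symmetric_def by blast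
  hence le: "L1norm M g \<le> L1norm M (\<lambda>s. g s + sc (-1) (f s))" unfolding bj_orth_def by blast
  have "L1norm M g = 1 * a + 1 * a"
    by (rule lin[OF gL]) (simp add: g_def, metis add.left_neutral add.right_neutral hf norm_zero)
  moreover have "L1norm M (\<lambda>s. g s + sc (-1) (f s)) = 0 * a + 1 * a"
    by (rule lin[OF L1_add[OF gL L1_sc[OF fL]]]) (simp add: p2)
  ultimately show False using le apos by simp
qed

end

theorem corollary3p5:
  fixes M :: "'s measure"
    and sc :: "'k::real_normed_field \<Rightarrow> 'x::banach \<Rightarrow> 'x"
    and f :: "'s \<Rightarrow> 'x"
  assumes "complete_measure M"
    and "sigma_finite_measure M"
    and "scalar_action sc"
    and "frechet_diff_norm TYPE('x)"
    and "f \<in> L1set M"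
    and "L1norm M f \<noteq> 0"
    and "left_symmetric sc M f"
  shows "smooth_point sc M f"
proof -
  interpret L1ctx M sc f by (rule L1ctx.intro[OF assms(1-6)])
  have ae: "AE s in M. f s \<noteq> 0" by (rule ae_nonzero[OF assms(7)])
  show ?thesis unfolding smooth_point_def
  proof (intro conjI allI impI ballI)
    show "f \<in> L1set M" by fact
    show "L1norm M f \<noteq> 0" by fact
    show "\<exists>F. support_functional sc M f F" using Fs_support by blast
    fix F G :: "('s \<Rightarrow> 'x) \<Rightarrow> 'k" and g :: "'s \<Rightarrow> 'x" assume F: "support_functional sc M f F" and G: "support_functional sc M f G" and g: "g \<in> L1set M"
    show "F g = G g" using support_unique[OF F g ae] support_unique[OF G g ae] by simp
  qed
qed


end
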